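(* Let $D\in\mathbb{N}$ and $r\in\{1,\dots,D\}$. For $\mu>0$ let $Y_\mu\sim\mathrm{Pois}_\mu^{(r,D)}$ and $Y'_\mu\sim\mathrm{Pois}_\mu^{(D-r+1,D)}$. Then both limits $\lim_{\mu\to\infty}\mathbb{D}[Y_\mu]$ and $\lim_{\mu\to\infty}\mathbb{D}[Y'_\mu]$ exist and are equal.
   Context: $\mathrm{Pois}_\mu^{(r,D)}$ is the law of the $r$-th smallest of $D$ i.i.d. Poisson($\mu$) random variables. For a nonnegative random variable $Y$ with positive finite mean, the index of dispersion is $\mathbb{D}[Y]=\operatorname{Var}(Y)/\mathbb{E}[Y]$. *)

theory Defs
  imports "HOL-Probability.Probability"
begin

definition order_stat :: "nat \<Rightarrow> nat \<Rightarrow> (nat \<Rightarrow> nat) \<Rightarrow> nat" where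
  "order_stat r D x = sort (map x [0..<D]) ! (r - 1)"

definition pois_order_pmf :: "real \<Rightarrow> nat \<Rightarrow> nat \<Rightarrow> nat pmf" where
  "pois_order_pmf \<mu> r D =
     map_pmf (order_stat r D) (Pi_pmf {..<D} 0 (\<lambda>_. poisson_pmf \<mu>))"

definition dispersion :: "nat pmf \<Rightarrow> real" where
  "dispersion p = measure_pmf.variance p real / measure_pmf.expectation p real"

end

theory Submission
  imports Defs
begin



lemma pmf_nat_sums:
  fixes p :: "nat pmf" and f :: "nat \<Rightarrow> 'b::{banach, second_countable_topology}"
  assumes "summable (\<lambda>k. norm (pmf p k *\<^sub>R f k))"
  shows "integrable p f" "(\<lambda>k. pmf p k *\<^sub>R f k) sums (\<integral>x. f x \<partial>p)"
proof -
  have i: "integrable (count_space UNIV) (\<lambda>k. pmf p k *\<^sub>R f k)"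
    using assms by (simp add: integrable_count_space_nat_iff)
  then show "integrable p f"
    by (simp add: measure_pmf_eq_density integrable_density)
  have "(\<integral>x. f x \<partial>p) = (\<integral>k. pmf p k *\<^sub>R f k \<partial>count_space UNIV)"
    by (simp add: measure_pmf_eq_density integral_density)
  then show "(\<lambda>k. pmf p k *\<^sub>R f k) sums (\<integral>x. f x \<partial>p)"
    using sums_integral_count_space_nat[OF i] by simp
qed

definition ffr :: "nat \<Rightarrow> nat \<Rightarrow> real" where
  "ffr j k = (\<Prod>i<j. real k - real i)"

lemma ffr_fact: "ffr j (k + j) * fact k = fact (k + j)"
proof (induction j arbitrary: k)
  case 0 then show ?case by (simp add: ffr_def)
next
  case (Suc j)
  have "ffr (Suc j) (k + Suc j) = ffr j (Suc k + j) * (real k + 1)"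
    unfolding ffr_def by (simp add: lessThan_Suc algebra_simps)
  then have "ffr (Suc j) (k + Suc j) * fact k = ffr j (Suc k + j) * fact (Suc k)"
    by (simp add: fact_Suc algebra_simps)
  also have "\<dots> = fact (k + Suc j)" using Suc[of "Suc k"] by simp
  finally show ?case .
qed

lemma ffr0: "ffr 0 k = 1" by (simp add: ffr_def)

lemma ffr_small: "k < j \<Longrightarrow> ffr j k = 0"
  unfolding ffr_def by (rule prod_zero) auto

lemma ffr_sums:
  fixes mu :: real
  shows "(\<lambda>k. mu ^ k / fact k * exp (-mu) * ffr j k) sums (mu^j)"
proof -
  have base: "(\<lambda>k. mu ^ k / fact k) sums exp mu"
    using exp_converges[of mu] by (simp add: divide_inverse mult.commute)
  have "(\<lambda>k. mu^j * exp (-mu) * (mu ^ k / fact k)) sums (mu^j * exp (-mu) * exp mu)"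
    by (intro sums_mult base)
  hence "(\<lambda>k. mu^j * exp (-mu) * (mu ^ k / fact k)) sums (mu^j)"
    by (simp add: exp_minus field_simps)
  moreover have "mu ^ (k+j) / fact (k+j) * exp (-mu) * ffr j (k+j)
      = mu^j * exp (-mu) * (mu ^ k / fact k)" for k
  proof -
    have F: "fact (k+j) = ffr j (k+j) * (fact k :: real)" using ffr_fact[of j k] by simp
    have "ffr j (k+j) \<noteq> 0" using F by (metis fact_nonzero mult_zero_left)
    then show ?thesis unfolding F by (simp add: field_simps power_add)
  qed
  ultimately have "(\<lambda>k. mu ^ (k+j) / fact (k+j) * exp (-mu) * ffr j (k+j)) sums (mu^j)"
    by simp
  then show ?thesis
    by (subst (asm) sums_iff_shift) (simp add: ffr_small)
qed

lemma central4_ffr: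
  fixes mu :: real
  shows "(real k - mu)^4 = ffr 4 k + (6 - 4*mu) * ffr 3 k + (7 - 12*mu + 6*mu^2) * ffr 2 k
     + (1 - 4*mu + 6*mu^2 - 4*mu^3) * ffr 1 k + mu^4"
  unfolding ffr_def by (simp add: numeral_eq_Suc lessThan_Suc power2_eq_square power3_eq_cube power4_eq_xxxx algebra_simps)

lemma poisson_central4:
  fixes mu :: real
  assumes "mu > 0"
  shows "integrable (poisson_pmf mu) (\<lambda>k. (real k - mu)^4)"
    "(\<integral>k. (real k - mu)^4 \<partial>poisson_pmf mu) = 3*mu^2 + mu"
proof -
  let ?t = "\<lambda>k. mu ^ k / fact k * exp (-mu)"
  have "(\<lambda>k. ?t k * ffr 4 k + (6 - 4*mu) * (?t k * ffr 3 k) + (7 - 12*mu + 6*mu^2) * (?t k * ffr 2 k)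
     + (1 - 4*mu + 6*mu^2 - 4*mu^3) * (?t k * ffr 1 k) + mu^4 * (?t k * ffr 0 k)) sums
     (mu^4 + (6 - 4*mu) * mu^3 + (7 - 12*mu + 6*mu^2) * mu^2 + (1 - 4*mu + 6*mu^2 - 4*mu^3) * mu^1 + mu^4 * mu^0)"
    by (intro sums_add sums_mult ffr_sums)
  moreover have "(mu^4 + (6 - 4*mu) * mu^3 + (7 - 12*mu + 6*mu^2) * mu^2 + (1 - 4*mu + 6*mu^2 - 4*mu^3) * mu^1 + mu^4 * mu^0) = 3*mu^2 + mu"
    by (simp add: power2_eq_square power3_eq_cube power4_eq_xxxx algebra_simps)
  moreover have "(\<lambda>k. ?t k * ffr 4 k + (6 - 4*mu) * (?t k * ffr 3 k) + (7 - 12*mu + 6*mu^2) * (?t k * ffr 2 k)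
     + (1 - 4*mu + 6*mu^2 - 4*mu^3) * (?t k * ffr 1 k) + mu^4 * (?t k * ffr 0 k)) =
     (\<lambda>k. pmf (poisson_pmf mu) k *\<^sub>R (real k - mu)^4)"
    by (rule ext, subst central4_ffr) (simp add: assms ffr0 field_simps)
  ultimately have S: "(\<lambda>k. pmf (poisson_pmf mu) k *\<^sub>R (real k - mu)^4) sums (3*mu^2 + mu)" by simp
  have sn: "summable (\<lambda>k. norm (pmf (poisson_pmf mu) k *\<^sub>R (real k - mu)^4))"
    using S by (simp add: sums_iff abs_mult)
  show "integrable (poisson_pmf mu) (\<lambda>k. (real k - mu)^4)" using pmf_nat_sums(1)[OF sn] .
  show "(\<integral>k. (real k - mu)^4 \<partial>poisson_pmf mu) = 3*mu^2 + mu"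
    using pmf_nat_sums(2)[OF sn] S sums_unique2 by blast
qed




definition Wd :: "real \<Rightarrow> real measure" where
  "Wd mu = distr (measure_pmf (poisson_pmf mu)) borel (\<lambda>k. (real k - mu) / sqrt mu)"

lemma real_distribution_Wd: "real_distribution (Wd mu)"
  unfolding Wd_def by (intro prob_space.real_distribution_distr) (auto simp: measure_pmf.prob_space_axioms)

lemma char_Wd:
  assumes "mu > 0"
  shows "char (Wd mu) t = exp (of_real mu * (iexp (t / sqrt mu) - 1) - \<i> * of_real (t * sqrt mu))"
proof -
  let ?s = "t / sqrt mu"
  have "char (Wd mu) t = (\<integral>k. iexp (t * ((real k - mu) / sqrt mu)) \<partial>poisson_pmf mu)"
    unfolding char_def Wd_def by (subst integral_distr) auto
  moreover
  have eq: "pmf (poisson_pmf mu) k *\<^sub>R iexp (t * ((real k - mu) / sqrt mu)) =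
     (exp (- of_real mu) * iexp (- ?s * mu)) * ((of_real mu * iexp ?s) ^ k /\<^sub>R fact k)" for k
  proof -
    have "iexp (t * ((real k - mu) / sqrt mu)) = iexp (- ?s * mu) * iexp ?s ^ k"
      by (simp add: exp_of_nat_mult[symmetric] exp_add[symmetric] algebra_simps diff_divide_distrib)
    then show ?thesis using assms
      by (simp add: scaleR_conv_of_real power_mult_distrib exp_of_real[symmetric] field_simps)
  qed
  have S: "(\<lambda>k. pmf (poisson_pmf mu) k *\<^sub>R iexp (t * ((real k - mu) / sqrt mu))) sums
     ((exp (- of_real mu) * iexp (- ?s * mu)) * exp (of_real mu * iexp ?s))"
    unfolding eq by (intro sums_mult exp_converges)
  have sn: "summable (\<lambda>k. norm (pmf (poisson_pmf mu) k *\<^sub>R iexp (t * ((real k - mu) / sqrt mu))))"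
  proof -
    have "norm (pmf (poisson_pmf mu) k *\<^sub>R iexp (t * ((real k - mu) / sqrt mu))) = pmf (poisson_pmf mu) k" for k
      by (simp add: norm_exp_i_times)
    moreover have "summable (\<lambda>k. pmf (poisson_pmf mu) k)"
    proof -
      have "(\<lambda>k. mu ^ k / fact k) sums exp mu"
        using exp_converges[of mu] by (simp add: divide_inverse mult.commute)
      then have "summable (\<lambda>k. mu ^ k / fact k * exp (-mu))"
        by (intro summable_mult2) (simp add: sums_iff)
      then show ?thesis using assms by simp
    qed
    ultimately show ?thesis by simp
  qed
  have "(\<integral>k. iexp (t * ((real k - mu) / sqrt mu)) \<partial>poisson_pmf mu) =
      (exp (- of_real mu) * iexp (- ?s * mu)) * exp (of_real mu * iexp ?s)"
    using pmf_nat_sums(2)[OF sn] S sums_unique2 by blast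
  moreover have "(exp (- of_real mu) * iexp (- ?s * mu)) * exp (of_real mu * iexp ?s) =
     exp (of_real mu * (iexp ?s - 1) - \<i> * of_real (t * sqrt mu))"
  proof -
    have "?s * mu = t * sqrt mu" using assms
      by (simp add: field_simps)
    then show ?thesis by (simp add: exp_add[symmetric] algebra_simps)
  qed
  ultimately show ?thesis by simp
qed

lemma char_Wd_lim:
  "((\<lambda>mu. char (Wd mu) t) \<longlongrightarrow> complex_of_real (exp (- (t^2) / 2))) at_top"
proof -
  define g where "g mu = of_real mu * (iexp (t / sqrt mu) - 1) - \<i> * of_real (t * sqrt mu)" for mu
  define L :: complex where "L = - of_real (t^2/2)"
  have bound: "norm (g mu - L) \<le> \<bar>t\<bar>^3 / (6 * sqrt mu)" if "mu > 0" for mu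
  proof -
    let ?s = "t / sqrt mu"
    have eq: "g mu - L = of_real mu * (iexp ?s - (\<Sum>k\<le>2. (\<i> * ?s)^k / fact k))"
    proof -
      have r: "mu * (t / sqrt mu) = t * sqrt mu"
        using that by (simp add: field_simps)
      have a: "of_real mu * (\<i> * of_real ?s) = \<i> * of_real (t * sqrt mu)"
        by (simp flip: r)
      have b: "of_real mu * ((\<i> * of_real ?s)^2 / 2) = - of_real (t^2/2)"
        using that by (simp add: field_simps power2_eq_square flip: of_real_mult)
      show ?thesis unfolding g_def L_def
        using a b by (simp add: numeral_2_eq_2 atMost_Suc algebra_simps)
    qed
    have "norm (g mu - L) = mu * cmod (iexp ?s - (\<Sum>k\<le>2. (\<i> * ?s)^k / fact k))"
      unfolding eq using that by (simp add: norm_mult)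
    also have "\<dots> \<le> mu * (\<bar>?s\<bar>^3 / fact 3)"
      using iexp_approx1[of ?s 2] that by (intro mult_left_mono) (auto simp: numeral_3_eq_3)
    also have "\<dots> = \<bar>t\<bar>^3 / (6 * sqrt mu)"
    proof -
      have "sqrt mu ^ 3 = mu * sqrt mu" using that
        by (simp add: power3_eq_cube)
      then show ?thesis using that
        by (simp add: power_divide abs_div fact_numeral field_simps)
    qed
    finally show ?thesis .
  qed
  have "((\<lambda>mu. \<bar>t\<bar>^3 / 6 * inverse (sqrt mu)) \<longlongrightarrow> \<bar>t\<bar>^3 / 6 * 0) at_top"
    by (intro tendsto_mult tendsto_const tendsto_inverse_0_at_top sqrt_at_top)
  then have "((\<lambda>mu. \<bar>t\<bar>^3 / (6 * sqrt mu)) \<longlongrightarrow> 0) at_top"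
    by (simp add: field_simps)
  then have "((\<lambda>mu. g mu - L) \<longlongrightarrow> 0) at_top"
    by (rule Lim_null_comparison[rotated]) (use bound in \<open>auto intro: eventually_at_top_linorderI[of 1]\<close>)
  then have "(g \<longlongrightarrow> L) at_top" by (simp add: LIM_zero_iff)
  then have "((\<lambda>mu. exp (g mu)) \<longlongrightarrow> exp L) at_top" by (rule tendsto_exp)
  moreover have "exp L = complex_of_real (exp (- (t^2) / 2))"
    unfolding L_def by (simp add: exp_of_real[symmetric])
  moreover have "eventually (\<lambda>mu. exp (g mu) = char (Wd mu) t) at_top"
    by (intro eventually_at_top_linorderI[of 1]) (simp add: char_Wd g_def)
  ultimately show ?thesis by (simp add: tendsto_cong)
qed




abbreviation Phi :: "real \<Rightarrow> real" where "Phi \<equiv> cdf std_normal_distribution"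

lemma std_normal_singleton: "measure std_normal_distribution {x} = 0"
proof -
  have "{x} \<in> null_sets std_normal_distribution"
  proof (subst null_sets_density_iff)
    show "{x} \<in> sets lborel \<and> (AE y in lborel. y \<in> {x} \<longrightarrow> ennreal (std_normal_density y) = 0)"
    proof
      show "AE y in lborel. y \<in> {x} \<longrightarrow> ennreal (std_normal_density y) = 0"
        by (rule eventually_mono[OF AE_lborel_singleton[of x]]) simp
    qed simp
  qed simp
  then show ?thesis by (simp add: measure_def emeasure_notin_sets null_setsD1)
qed

lemma isCont_Phi: "isCont Phi x"
  using finite_borel_measure.isCont_cdf[OF real_distribution.finite_borel_measure_M[OF real_dist_normal_dist]] std_normal_singleton by simp

lemma std_normal_symm: "distr std_normal_distribution borel uminus = std_normal_distribution"
proof (rule Levy_uniqueness)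
  show "real_distribution (distr std_normal_distribution borel uminus)"
    using real_dist_normal_dist
    by (intro prob_space.real_distribution_distr) (auto simp: real_distribution_def)
  show "real_distribution std_normal_distribution" by (rule real_dist_normal_dist)
  show "char (distr std_normal_distribution borel uminus) = char std_normal_distribution"
  proof
    fix t
    have "char (distr std_normal_distribution borel uminus) t = char std_normal_distribution (- t)"
      unfolding char_def by (subst integral_distr) auto
    then show "char (distr std_normal_distribution borel uminus) t = char std_normal_distribution t"
      by (simp add: char_std_normal_distribution)
  qed
qed

lemma Phi_symm: "Phi (- x) = 1 - Phi x"
proof -
  interpret N: real_distribution std_normal_distribution by (rule real_dist_normal_dist)
  have "Phi (- x) = measure (distr std_normal_distribution borel uminus) {..-x}"
    by (simp add: std_normal_symm cdf_def)
  also have "\<dots> = measure std_normal_distribution {x..}"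
    by (subst measure_distr) (auto intro!: arg_cong[where f="measure _"])
  also have "\<dots> = 1 - measure std_normal_distribution {..<x}"
    using N.prob_compl[of "{..<x}"] by (simp add: Compl_eq_Diff_UNIV[symmetric] )
  also have "measure std_normal_distribution {..<x} = Phi x"
  proof -
    have "{..x} = {..<x} \<union> {x}" by auto
    then have "Phi x = measure std_normal_distribution {..<x} + measure std_normal_distribution {x}"
      unfolding cdf_def using N.finite_measure_Union[of "{..<x}" "{x}"] by simp
    then show ?thesis using std_normal_singleton by simp
  qed
  finally show ?thesis .
qed

lemma clt_poisson:
  assumes X: "filterlim X at_top sequentially"
  shows "(\<lambda>n. cdf (Wd (X n)) x) \<longlonglongrightarrow> Phi x"
proof -
  have "weak_conv_m (\<lambda>n. Wd (X n)) std_normal_distribution"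
  proof (rule levy_continuity)
    show "real_distribution (Wd (X n))" for n by (rule real_distribution_Wd)
    show "real_distribution std_normal_distribution" by (rule real_dist_normal_dist)
    fix t
    show "(\<lambda>n. char (Wd (X n)) t) \<longlonglongrightarrow> char std_normal_distribution t"
      unfolding char_std_normal_distribution
      using filterlim_compose[OF char_Wd_lim X] by simp
  qed
  then show ?thesis unfolding weak_conv_m_def weak_conv_def using isCont_Phi by blast
qed




lemma sorted_nth_filter:
  fixes xs :: "'a::linorder list"
  assumes "sorted xs" "j < length xs" "\<And>a b. P b \<Longrightarrow> a \<le> b \<Longrightarrow> P a"
  shows "P (xs ! j) \<longleftrightarrow> j < length (filter P xs)"
  using assms(1,2)
proof (induction xs arbitrary: j)
  case Nil then show ?case by simp
next
  case (Cons a xs)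
  have allge: "\<forall>y\<in>set xs. a \<le> y" using Cons.prems(1) by simp
  show ?case
  proof (cases "P a")
    case True
    show ?thesis
    proof (cases j)
      case 0 then show ?thesis using True by simp
    next
      case (Suc j')
      then show ?thesis using Cons True by simp
    qed
  next
    case False
    have nf: "filter P xs = []"
      using allge False assms(3) by (auto simp: filter_empty_conv)
    have "\<not> P ((a # xs) ! j)"
    proof (cases j)
      case 0 then show ?thesis using False by simp
    next
      case (Suc j')
      then have "(a # xs) ! j \<in> set xs" using Cons.prems(2) by simp
      then show ?thesis using allge False assms(3) by blast
    qed
    then show ?thesis using False nf by simp
  qed
qed

lemma order_stat_le_iff:
  assumes "1 \<le> r" "r \<le> D"
  shows "real (order_stat r D x) \<le> c \<longleftrightarrow> r \<le> card {i\<in>{..<D}. real (x i) \<le> c}"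
proof -
  let ?ys = "map x [0..<D]"
  let ?xs = "sort ?ys"
  let ?P = "\<lambda>y::nat. real y \<le> c"
  have "?P (?xs ! (r - 1)) \<longleftrightarrow> r - 1 < length (filter ?P ?xs)"
    by (rule sorted_nth_filter) (use assms in auto)
  moreover have "length (filter ?P ?xs) = length (filter ?P ?ys)"
    by (metis mset_filter mset_sort size_mset)
  moreover have "length (filter ?P ?ys) = card {i\<in>{..<D}. real (x i) \<le> c}"
  proof -
    have "length (filter ?P ?ys) = length (filter (\<lambda>i. real (x i) \<le> c) [0..<D])"
      by (simp add: filter_map comp_def)
    also have "\<dots> = card (set (filter (\<lambda>i. real (x i) \<le> c) [0..<D]))"
      by (rule distinct_card[symmetric]) simp
    also have "set (filter (\<lambda>i. real (x i) \<le> c) [0..<D]) = {i\<in>{..<D}. real (x i) \<le> c}"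
      by auto
    finally show ?thesis .
  qed
  ultimately show ?thesis using assms unfolding order_stat_def by auto
qed

lemma map_pmf_bool:
  fixes f :: "'a \<Rightarrow> bool"
  shows "map_pmf f q = bernoulli_pmf (measure_pmf.prob q {x. f x})"
proof (rule pmf_eqI)
  fix b
  have p01: "0 \<le> measure_pmf.prob q {x. f x}" "measure_pmf.prob q {x. f x} \<le> 1" by auto
  show "pmf (map_pmf f q) b = pmf (bernoulli_pmf (measure_pmf.prob q {x. f x})) b"
  proof (cases b)
    case True
    then show ?thesis using p01 by (simp add: pmf_map vimage_def)
  next
    case False
    have "measure_pmf.prob q (f -` {False}) = 1 - measure_pmf.prob q {x. f x}"
      using measure_pmf.prob_compl[of "{x. f x}" q] by (simp add: vimage_def Compl_eq_Diff_UNIV[symmetric] Collect_neg_eq)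
    then show ?thesis using p01 False by (simp add: pmf_map)
  qed
qed

lemma Pi_pmf_prob_dflt:
  assumes "finite A" "\<And>f g. (\<forall>i\<in>A. f i = g i) \<Longrightarrow> f \<in> E \<longleftrightarrow> g \<in> E"
  shows "measure_pmf.prob (Pi_pmf A d p) E = measure_pmf.prob (Pi_pmf A d' p) E"
proof -
  have "Pi_pmf A d' p = map_pmf (\<lambda>f x. if x \<in> A then f x else d') (Pi_pmf A d p)"
    using Pi_pmf_default_swap[OF assms(1)] by metis
  moreover have "(\<lambda>f x. if x \<in> A then f x else d') -` E = E"
  proof -
    have "((\<lambda>x. if x \<in> A then f x else d') \<in> E) \<longleftrightarrow> (f \<in> E)" for f by (rule assms(2)) simp
    then show ?thesis by blast
  qed
  ultimately show ?thesis by (simp add: measure_map_pmf)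
qed

lemma card_restr_iff: "(\<forall>i\<in>{..<D}. f i = g i) \<Longrightarrow> card {i. i < D \<and> f i} = card {i. i < D \<and> g i}"
  by (rule arg_cong[where f=card]) auto

definition prb :: "nat \<Rightarrow> nat \<Rightarrow> real \<Rightarrow> real" where
  "prb D r p = measure_pmf.prob (Pi_pmf {..<D} False (\<lambda>_. bernoulli_pmf p)) {b. r \<le> card {i\<in>{..<D}. b i}}"

definition Fp :: "real \<Rightarrow> real \<Rightarrow> real" where
  "Fp mu c = measure_pmf.prob (poisson_pmf mu) {k. real k \<le> c}"

lemma order_stat_prob:
  assumes "1 \<le> r" "r \<le> D"
  shows "measure_pmf.prob (pois_order_pmf mu r D) {y. real y \<le> c} = prb D r (Fp mu c)"
proof -
  let ?Q = "Pi_pmf {..<D} (0::nat) (\<lambda>_. poisson_pmf mu)"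
  let ?E = "{b. r \<le> card {i\<in>{..<D}. b i}}"
  let ?f = "\<lambda>k::nat. real k \<le> c"
  have "measure_pmf.prob (pois_order_pmf mu r D) {y. real y \<le> c} =
      measure_pmf.prob ?Q {x. real (order_stat r D x) \<le> c}"
    unfolding pois_order_pmf_def by (simp add: measure_map_pmf vimage_def)
  also have "{x. real (order_stat r D x) \<le> c} = (\<lambda>h. ?f \<circ> h) -` ?E"
    using order_stat_le_iff[OF assms] by auto
  also have "measure_pmf.prob ?Q ((\<lambda>h. ?f \<circ> h) -` ?E) =
      measure_pmf.prob (map_pmf (\<lambda>h. ?f \<circ> h) ?Q) ?E"
    by (simp add: measure_map_pmf)
  also have "map_pmf (\<lambda>h. ?f \<circ> h) ?Q = Pi_pmf {..<D} (?f 0) (\<lambda>_. map_pmf ?f (poisson_pmf mu))"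
    by (rule Pi_pmf_map[symmetric]) auto
  also have "map_pmf ?f (poisson_pmf mu) = bernoulli_pmf (Fp mu c)"
    unfolding Fp_def by (rule map_pmf_bool)
  also have "measure_pmf.prob (Pi_pmf {..<D} (?f 0) (\<lambda>_. bernoulli_pmf (Fp mu c))) ?E = prb D r (Fp mu c)"
    unfolding prb_def by (rule Pi_pmf_prob_dflt) (auto dest!: card_restr_iff)
  finally show ?thesis .
qed

lemma prb_symm:
  assumes "1 \<le> r" "r \<le> D" "0 \<le> p" "p \<le> 1"
  shows "prb D (D - r + 1) (1 - p) = 1 - prb D r p"
proof -
  let ?Q = "Pi_pmf {..<D} False (\<lambda>_. bernoulli_pmf p)"
  let ?E = "{b. r \<le> card {i\<in>{..<D}. b i}}"
  let ?E' = "{b. D - r + 1 \<le> card {i\<in>{..<D}. b i}}"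
  have bn: "map_pmf Not (bernoulli_pmf p) = bernoulli_pmf (1 - p)"
  proof -
    have "measure_pmf.prob (bernoulli_pmf p) {x. \<not> x} = 1 - p"
    proof -
      have "{x. \<not> x} = {False}" by auto
      then show ?thesis using assms by (simp add: measure_pmf_single)
    qed
    then show ?thesis by (simp add: map_pmf_bool)
  qed
  have "prb D (D - r + 1) (1 - p) = measure_pmf.prob (Pi_pmf {..<D} True (\<lambda>_. bernoulli_pmf (1 - p))) ?E'"
    unfolding prb_def by (rule Pi_pmf_prob_dflt) (auto dest!: card_restr_iff)
  also have "Pi_pmf {..<D} True (\<lambda>_. bernoulli_pmf (1 - p)) = map_pmf (\<lambda>h. Not \<circ> h) ?Q"
    unfolding bn[symmetric] by (rule Pi_pmf_map) auto
  also have "measure_pmf.prob (map_pmf (\<lambda>h. Not \<circ> h) ?Q) ?E' = measure_pmf.prob ?Q (UNIV - ?E)"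
  proof -
    have "(\<lambda>h. Not \<circ> h) -` ?E' = UNIV - ?E"
    proof -
      have "card {i\<in>{..<D}. \<not> h i} = D - card {i\<in>{..<D}. h i}" for h :: "nat \<Rightarrow> bool"
      proof -
        have "{i\<in>{..<D}. \<not> h i} = {..<D} - {i\<in>{..<D}. h i}" by auto
        moreover have "card ({..<D} - {i\<in>{..<D}. h i}) = D - card {i\<in>{..<D}. h i}"
          by (subst card_Diff_subset) auto
        ultimately show ?thesis by simp
      qed
      moreover have "card {i\<in>{..<D}. h i} \<le> D" for h :: "nat \<Rightarrow> bool"
        by (metis (no_types, lifting) card_lessThan card_mono finite_lessThan mem_Collect_eq subsetI)
      ultimately show ?thesis using assms(1,2) by auto
    qed
    then show ?thesis by (simp add: measure_map_pmf)
  qed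
  also have "\<dots> = 1 - prb D r p"
    unfolding prb_def using measure_pmf.prob_compl[of ?E ?Q] by simp
  finally show ?thesis .
qed




definition Sr :: "nat \<Rightarrow> nat \<Rightarrow> (nat \<Rightarrow> bool) set" where
  "Sr D r = {b \<in> PiE_dflt {..<D} False (\<lambda>_. UNIV). r \<le> card {i\<in>{..<D}. b i}}"

definition polyr :: "nat \<Rightarrow> nat \<Rightarrow> real \<Rightarrow> real" where
  "polyr D r q = (\<Sum>b\<in>Sr D r. \<Prod>i<D. of_bool (b i) * q + (1 - of_bool (b i)) * (1 - q))"

lemma finite_Sr: "finite (Sr D r)"
  unfolding Sr_def by (rule finite_subset[of _ "PiE_dflt {..<D} False (\<lambda>_. UNIV)"]) auto

lemma prb_polyr:
  assumes "0 \<le> q" "q \<le> 1"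
  shows "prb D r q = polyr D r q"
proof -
  let ?Q = "Pi_pmf {..<D} False (\<lambda>_. bernoulli_pmf q)"
  let ?E = "{b. r \<le> card {i\<in>{..<D}. b i}}"
  have sub: "set_pmf ?Q \<subseteq> PiE_dflt {..<D} False (\<lambda>_. UNIV)"
    using set_Pi_pmf_subset[of "{..<D}" False "\<lambda>_. bernoulli_pmf q"] by (auto simp: PiE_dflt_def)
  have "prb D r q = measure_pmf.prob ?Q (?E \<inter> PiE_dflt {..<D} False (\<lambda>_. UNIV))"
  proof -
    have "measure_pmf.prob ?Q ((?E \<inter> PiE_dflt {..<D} False (\<lambda>_. UNIV)) \<inter> set_pmf ?Q) =
        measure_pmf.prob ?Q (?E \<inter> set_pmf ?Q)"
      using sub by (intro arg_cong[where f="measure _"]) auto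
    then show ?thesis unfolding prb_def by (simp add: measure_Int_set_pmf)
  qed
  also have "?E \<inter> PiE_dflt {..<D} False (\<lambda>_. UNIV) = Sr D r" unfolding Sr_def by auto
  also have "measure_pmf.prob ?Q (Sr D r) = (\<Sum>b\<in>Sr D r. pmf ?Q b)"
    by (rule measure_measure_pmf_finite[OF finite_Sr])
  also have "\<dots> = polyr D r q"
    unfolding polyr_def
  proof (rule sum.cong[OF refl])
    fix b assume "b \<in> Sr D r"
    then have "\<forall>x. x \<notin> {..<D} \<longrightarrow> b x = False" unfolding Sr_def PiE_dflt_def by auto
    then show "pmf ?Q b = (\<Prod>i<D. of_bool (b i) * q + (1 - of_bool (b i)) * (1 - q))"
      using assms by (simp add: pmf_Pi) (intro prod.cong refl, auto)
  qed
  finally show ?thesis .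
qed

lemma isCont_polyr: "isCont (polyr D r) q"
  unfolding polyr_def by (intro continuous_intros)

lemma bernoulli_0: "bernoulli_pmf 0 = return_pmf False"
  by (rule pmf_eqI) (case_tac i, auto simp: pmf_return)

lemma bernoulli_1: "bernoulli_pmf 1 = return_pmf True"
  by (rule pmf_eqI) (case_tac i, auto simp: pmf_return)

lemma prb_0: "1 \<le> r \<Longrightarrow> prb D r 0 = 0"
  unfolding prb_def bernoulli_0 by simp

lemma prb_1: "r \<le> D \<Longrightarrow> prb D r 1 = 1"
proof -
  assume "r \<le> D"
  have "{i. i < D \<and> i < D} = {..<D}" by auto
  then show ?thesis unfolding prb_def bernoulli_1 using \<open>r \<le> D\<close> by (simp add: indicator_def)
qed




lemma trunc_err:
  fixes y x K :: real
  assumes "K > 0" "\<bar>y\<bar> \<le> 1 + x^2"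
  shows "\<bar>y - max (-K) (min K y)\<bar> \<le> (2 + 2 * x^4) / K"
proof (cases "\<bar>y\<bar> \<le> K")
  case True
  then have "max (-K) (min K y) = y" by auto
  then show ?thesis using assms by simp
next
  case False
  have "\<bar>y - max (-K) (min K y)\<bar> \<le> \<bar>y\<bar>" using False assms(1) by (auto simp: abs_if max_def min_def)
  also have "\<bar>y\<bar> \<le> \<bar>y\<bar> * \<bar>y\<bar> / K"
  proof -
    have "\<bar>y\<bar> * K \<le> \<bar>y\<bar> * \<bar>y\<bar>" using False by (intro mult_left_mono) auto
    then show ?thesis using assms(1) by (simp add: pos_le_divide_eq)
  qed
  also have "\<bar>y\<bar> * \<bar>y\<bar> \<le> (1 + x^2) * (1 + x^2)"
    using assms(2) by (intro mult_mono) auto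
  also have "(1 + x^2) * (1 + x^2) \<le> 2 + 2 * x^4"
  proof -
    have "0 \<le> (x^2 - 1)^2" by simp
    then show ?thesis by (simp add: power2_eq_square power4_eq_xxxx algebra_simps)
  qed
  finally show ?thesis using assms(1) by (simp add: divide_right_mono)
qed

lemma UI_conv:
  fixes N :: "nat \<Rightarrow> real measure" and M :: "real measure" and f :: "real \<Rightarrow> real" and C :: real
  assumes N: "\<And>n. real_distribution (N n)" and M: "real_distribution M" and W: "weak_conv_m N M"
    and ev: "eventually (\<lambda>n. integrable (N n) (\<lambda>x. x^4) \<and> (\<integral>x. x^4 \<partial>N n) \<le> C) sequentially"
    and fc: "\<And>x. isCont f x" and fb: "\<And>x. \<bar>f x\<bar> \<le> 1 + x^2"
  shows "integrable M f" "(\<lambda>n. \<integral>x. f x \<partial>N n) \<longlonglongrightarrow> (\<integral>x. f x \<partial>M)"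
proof -
  interpret M: real_distribution M by (rule M)
  interpret N: real_distribution "N n" for n by (rule N)
  have fmeas[measurable]: "f \<in> borel_measurable borel"
    by (intro borel_measurable_continuous_onI continuous_at_imp_continuous_on) (simp add: fc)
  define h where "h K x = min (x^4) (real K)" for K :: nat and x :: real
  have hcont: "isCont (h K) x" for K x unfolding h_def by (intro continuous_intros)
  have hmeas[measurable]: "h K \<in> borel_measurable borel" for K unfolding h_def by measurable
  have hbd: "norm (h K x) \<le> real K" for K x unfolding h_def by auto
  have hint: "integrable P (h K)" if "real_distribution P" for P K
  proof -
    interpret P: real_distribution P by (rule that)
    show ?thesis by (rule P.integrable_const_bound[where B="real K"]) (use hbd in \<open>auto intro!: AE_I2\<close>)
  qed
  have hlim: "(\<lambda>n. \<integral>x. h K x \<partial>N n) \<longlonglongrightarrow> (\<integral>x. h K x \<partial>M)" for K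
    by (rule weak_conv_imp_integral_bdd_continuous_conv[OF N M W hcont hbd])
  have hC: "(\<integral>x. h K x \<partial>M) \<le> C" for K
  proof (rule tendsto_upperbound[OF hlim])
    show "eventually (\<lambda>n. (\<integral>x. h K x \<partial>N n) \<le> C) sequentially"
    proof (rule eventually_mono[OF ev])
      fix n assume "integrable (N n) (\<lambda>x. x^4) \<and> (\<integral>x. x^4 \<partial>N n) \<le> C"
      moreover have "(\<integral>x. h K x \<partial>N n) \<le> (\<integral>x. x^4 \<partial>N n)"
        using calculation by (intro integral_mono hint[OF N]) (auto simp: h_def)
      ultimately show "(\<integral>x. h K x \<partial>N n) \<le> C" by linarith
    qed
  qed simp
  have hinc: "incseq (\<lambda>K. \<integral>x. h K x \<partial>M)"
    by (intro incseq_SucI integral_mono hint[OF M]) (auto simp: h_def)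
  have hconv: "(\<lambda>K. \<integral>x. h K x \<partial>M) \<longlonglongrightarrow> (SUP K. \<integral>x. h K x \<partial>M)"
    by (rule LIMSEQ_incseq_SUP[OF _ hinc]) (auto intro!: bdd_aboveI hC)
  have hpt: "(\<lambda>K. h K x) \<longlonglongrightarrow> x^4" for x
  proof (rule tendsto_eventually)
    show "eventually (\<lambda>K. h K x = x^4) sequentially"
    proof (rule eventually_sequentiallyI[of "nat \<lceil>x^4\<rceil>"])
      fix K assume "nat \<lceil>x^4\<rceil> \<le> K"
      then have "x^4 \<le> real K" by linarith
      then show "h K x = x^4" unfolding h_def by simp
    qed
  qed
  have M4: "integrable M (\<lambda>x. x^4)" and M4eq: "(\<integral>x. x^4 \<partial>M) = (SUP K. \<integral>x. h K x \<partial>M)"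
     apply (rule integrable_monotone_convergence[OF hint[OF M] _ _ hconv])
       apply (auto simp: mono_def h_def hpt[unfolded h_def] intro!: min.mono)[3]
    apply (rule integral_monotone_convergence[OF hint[OF M] _ _ hconv])
      apply (auto simp: mono_def h_def hpt[unfolded h_def] intro!: min.mono)
    done
  have M4C: "(\<integral>x. x^4 \<partial>M) \<le> C"
    unfolding M4eq by (rule cSUP_least) (auto simp: hC)
  have C0: "0 \<le> C"
  proof -
    obtain n where "integrable (N n) (\<lambda>x. x^4) \<and> (\<integral>x. x^4 \<partial>N n) \<le> C"
      using ev by (auto simp: eventually_sequentially)
    moreover have "0 \<le> (\<integral>x. x^4 \<partial>N n)"
      by (intro integral_nonneg_AE AE_I2) (simp add: zero_le_even_power)
    ultimately show ?thesis by linarith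
  qed
  have dom: "integrable P f" if "real_distribution P" "integrable P (\<lambda>x. x^4)" for P
  proof -
    interpret P: real_distribution P by (rule that)
    have "integrable P (\<lambda>x. 2 + x^4)" using that(2) by simp
    moreover have "norm (f x) \<le> norm (2 + x^4)" for x
    proof -
      have "x^2 \<le> 1 + x^4"
      proof -
        have "0 \<le> (x^2 - 1)^2" by simp
        then have "2 * x^2 \<le> 1 + x^4" by (simp add: power2_eq_square power4_eq_xxxx algebra_simps)
        moreover have "0 \<le> x^2" by simp
        ultimately show ?thesis by linarith
      qed
      then show ?thesis using fb[of x] by (simp add: abs_if) 
    qed
    ultimately show ?thesis
      by (intro Bochner_Integration.integrable_bound[of P "\<lambda>x. 2 + x^4" f]) (auto intro!: AE_I2)
  qed
  show intM: "integrable M f" by (rule dom[OF M M4])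
  define T where "T K y = max (-K) (min K y)" for K y :: real
  have Tcont: "isCont (\<lambda>x. T K (f x)) x" for K x unfolding T_def by (intro continuous_intros fc)
  have Tbd: "norm (T K (f x)) \<le> \<bar>K\<bar>" for K x unfolding T_def by auto
  have Tmeas[measurable]: "(\<lambda>x. T K (f x)) \<in> borel_measurable borel" for K unfolding T_def by measurable
  have Tint: "integrable P (\<lambda>x. T K (f x))" if "real_distribution P" for P K
  proof -
    interpret P: real_distribution P by (rule that)
    show ?thesis by (rule P.integrable_const_bound[where B="\<bar>K\<bar>"]) (use Tbd in \<open>auto intro!: AE_I2\<close>)
  qed
  have errbound: "\<bar>(\<integral>x. f x \<partial>P) - (\<integral>x. T K (f x) \<partial>P)\<bar> \<le> (2 + 2 * c) / K"
    if P: "real_distribution P" and i4: "integrable P (\<lambda>x. x^4)" and c: "(\<integral>x. x^4 \<partial>P) \<le> c"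
      and K: "K > 0" for P K c
  proof -
    interpret P: real_distribution P by (rule P)
    have "\<bar>(\<integral>x. f x \<partial>P) - (\<integral>x. T K (f x) \<partial>P)\<bar> = \<bar>\<integral>x. f x - T K (f x) \<partial>P\<bar>"
      using dom[OF P i4] Tint[OF P] by simp
    also have "\<dots> \<le> (\<integral>x. \<bar>f x - T K (f x)\<bar> \<partial>P)" by (rule integral_abs_bound)
    also have "\<dots> \<le> (\<integral>x. (2 + 2 * x^4) / K \<partial>P)"
      using dom[OF P i4] Tint[OF P] i4 K fb unfolding T_def
      by (intro integral_mono trunc_err) auto
    also have "\<dots> = (2 + 2 * (\<integral>x. x^4 \<partial>P)) / K"
      using i4 P.prob_space by simp
    also have "\<dots> \<le> (2 + 2 * c) / K" using c K by (simp add: divide_right_mono)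
    finally show ?thesis .
  qed
  show "(\<lambda>n. \<integral>x. f x \<partial>N n) \<longlonglongrightarrow> (\<integral>x. f x \<partial>M)"
  proof (rule tendstoI)
    fix e :: real assume e: "e > 0"
    define K :: real where "K = 3 * (2 + 2 * C) / e + 1"
    have K0: "K > 0" unfolding K_def using C0 e by (simp add: add_pos_nonneg)
    have Ke: "(2 + 2 * C) / K < e / 3"
    proof -
      have "3 * (2 + 2 * C) < e * K" unfolding K_def using e by (simp add: field_simps)
      then show ?thesis using K0 e by (simp add: field_simps)
    qed
    have lim: "(\<lambda>n. \<integral>x. T K (f x) \<partial>N n) \<longlonglongrightarrow> (\<integral>x. T K (f x) \<partial>M)"
      by (rule weak_conv_imp_integral_bdd_continuous_conv[OF N M W Tcont Tbd])
    have ev1: "eventually (\<lambda>n. dist (\<integral>x. T K (f x) \<partial>N n) (\<integral>x. T K (f x) \<partial>M) < e / 3) sequentially"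
      using tendstoD[OF lim, of "e/3"] e by simp
    have bM: "\<bar>(\<integral>x. f x \<partial>M) - (\<integral>x. T K (f x) \<partial>M)\<bar> \<le> (2 + 2 * C) / K"
      by (rule errbound[OF M M4 M4C K0])
    show "eventually (\<lambda>n. dist (\<integral>x. f x \<partial>N n) (\<integral>x. f x \<partial>M) < e) sequentially"
      using ev1 ev
    proof eventually_elim
      case (elim n)
      have bN: "\<bar>(\<integral>x. f x \<partial>N n) - (\<integral>x. T K (f x) \<partial>N n)\<bar> \<le> (2 + 2 * C) / K"
        using elim(2) by (intro errbound[OF N _ _ K0]) auto
      show ?case using elim(1) bN bM Ke unfolding dist_real_def by linarith
    qed
  qed
qed




definition Nd :: "real \<Rightarrow> nat \<Rightarrow> nat \<Rightarrow> real measure" where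
  "Nd mu r D = distr (measure_pmf (pois_order_pmf mu r D)) borel (\<lambda>y. (real y - mu) / sqrt mu)"

definition Gr :: "nat \<Rightarrow> nat \<Rightarrow> real \<Rightarrow> real" where
  "Gr D r x = prb D r (Phi x)"

lemma real_distribution_Nd: "real_distribution (Nd mu r D)"
  unfolding Nd_def by (intro prob_space.real_distribution_distr) (auto simp: measure_pmf.prob_space_axioms)

lemma Phi01: "0 \<le> Phi x" "Phi x \<le> 1"
  using finite_borel_measure.cdf_nonneg[OF real_distribution.finite_borel_measure_M[OF real_dist_normal_dist]]
    real_distribution.cdf_bounded_prob[OF real_dist_normal_dist] by auto

lemma cdf_Wd: "mu > 0 \<Longrightarrow> cdf (Wd mu) x = Fp mu (mu + sqrt mu * x)"
proof -
  assume mu: "mu > 0"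
  have "cdf (Wd mu) x = measure_pmf.prob (poisson_pmf mu) ((\<lambda>k. (real k - mu) / sqrt mu) -` {..x})"
    unfolding cdf_def Wd_def by (subst measure_distr) auto
  also have "(\<lambda>k. (real k - mu) / sqrt mu) -` {..x} = {k. real k \<le> mu + sqrt mu * x}"
    using mu by (auto simp: pos_divide_le_eq algebra_simps)
  finally show ?thesis unfolding Fp_def .
qed

lemma cdf_Nd:
  assumes "mu > 0" "1 \<le> r" "r \<le> D"
  shows "cdf (Nd mu r D) x = prb D r (Fp mu (mu + sqrt mu * x))"
proof -
  have "cdf (Nd mu r D) x = measure_pmf.prob (pois_order_pmf mu r D) ((\<lambda>y. (real y - mu) / sqrt mu) -` {..x})"
    unfolding cdf_def Nd_def by (subst measure_distr) auto
  also have "(\<lambda>y. (real y - mu) / sqrt mu) -` {..x} = {y. real y \<le> mu + sqrt mu * x}"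
    using assms(1) by (auto simp: pos_divide_le_eq algebra_simps)
  finally show ?thesis using order_stat_prob[OF assms(2,3)] by simp
qed

lemma cdf_Nd_lim:
  assumes X: "filterlim X at_top sequentially" and r: "1 \<le> r" "r \<le> D"
  shows "(\<lambda>n. cdf (Nd (X n) r D) x) \<longlonglongrightarrow> Gr D r x"
proof -
  have "(\<lambda>n. polyr D r (cdf (Wd (X n)) x)) \<longlonglongrightarrow> polyr D r (Phi x)"
    by (rule isCont_tendsto_compose[OF isCont_polyr clt_poisson[OF X]])
  moreover have "polyr D r (Phi x) = Gr D r x"
    unfolding Gr_def using Phi01 by (simp add: prb_polyr)
  moreover have E: "eventually (\<lambda>n. polyr D r (cdf (Wd (X n)) x) = cdf (Nd (X n) r D) x) sequentially"
  proof -
    have "eventually (\<lambda>n. X n > 0) sequentially"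
      using X by (simp add: filterlim_at_top_dense)
    then show ?thesis
    proof eventually_elim
      case (elim n)
      interpret W: real_distribution "Wd (X n)" by (rule real_distribution_Wd)
      have "0 \<le> cdf (Wd (X n)) x" "cdf (Wd (X n)) x \<le> 1"
        using W.cdf_nonneg W.cdf_bounded_prob by auto
      then show ?case using elim r by (simp add: cdf_Nd cdf_Wd prb_polyr)
    qed
  qed
  ultimately show ?thesis using tendsto_cong[OF E] by simp
qed

lemma Gr_polyr: "Gr D r x = polyr D r (Phi x)"
  unfolding Gr_def using Phi01 by (simp add: prb_polyr)

lemma isCont_Gr: "isCont (Gr D r) x"
proof -
  have "Gr D r = (\<lambda>x. polyr D r (Phi x))" by (simp add: fun_eq_iff Gr_polyr)
  then show ?thesis using isCont_o2[OF isCont_Phi isCont_polyr] by simp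
qed

lemma Gr_mono:
  assumes r: "1 \<le> r" "r \<le> D" and xy: "x \<le> y"
  shows "Gr D r x \<le> Gr D r y"
proof (rule LIMSEQ_le[OF cdf_Nd_lim[OF filterlim_real_sequentially r] cdf_Nd_lim[OF filterlim_real_sequentially r]])
  show "\<exists>N. \<forall>n\<ge>N. cdf (Nd (real n) r D) x \<le> cdf (Nd (real n) r D) y"
    using finite_borel_measure.cdf_nondecreasing[OF real_distribution.finite_borel_measure_M[OF real_distribution_Nd]] xy by blast
qed

lemma Gr_bot: "1 \<le> r \<Longrightarrow> (Gr D r \<longlongrightarrow> 0) at_bot"
proof -
  assume r: "1 \<le> r"
  have "((\<lambda>x. polyr D r (Phi x)) \<longlongrightarrow> polyr D r 0) at_bot"
    by (rule isCont_tendsto_compose[OF isCont_polyr finite_borel_measure.cdf_lim_at_bot[OF real_distribution.finite_borel_measure_M[OF real_dist_normal_dist]]])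
  moreover have "polyr D r 0 = 0" using prb_0[OF r] prb_polyr[of 0 D r] by simp
  ultimately show ?thesis by (simp add: Gr_polyr[abs_def])
qed

lemma Gr_top: "r \<le> D \<Longrightarrow> (Gr D r \<longlongrightarrow> 1) at_top"
proof -
  assume r: "r \<le> D"
  have "((\<lambda>x. polyr D r (Phi x)) \<longlongrightarrow> polyr D r 1) at_top"
    by (rule isCont_tendsto_compose[OF isCont_polyr real_distribution.cdf_lim_at_top_prob[OF real_dist_normal_dist]])
  moreover have "polyr D r 1 = 1" using prb_1[OF r] prb_polyr[of 1 D r] by simp
  ultimately show ?thesis by (simp add: Gr_polyr[abs_def])
qed

definition Mr :: "nat \<Rightarrow> nat \<Rightarrow> real measure" where
  "Mr D r = interval_measure (Gr D r)"

lemma Mr_props: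
  assumes r: "1 \<le> r" "r \<le> D"
  shows "real_distribution (Mr D r)" "cdf (Mr D r) = Gr D r"
proof -
  have a: "\<And>x y. x \<le> y \<Longrightarrow> Gr D r x \<le> Gr D r y" using Gr_mono[OF r] by blast
  have b: "\<And>a. continuous (at_right a) (Gr D r)"
    using isCont_Gr continuous_at_imp_continuous_at_within by blast
  show "real_distribution (Mr D r)" unfolding Mr_def
    by (rule real_distribution_interval_measure[OF a b Gr_bot Gr_top]) (use r in auto)
  show "cdf (Mr D r) = Gr D r" unfolding Mr_def
    by (rule cdf_interval_measure[OF a b Gr_bot]) (use r in auto)
qed

lemma weak_conv_Nd:
  assumes X: "filterlim X at_top sequentially" and r: "1 \<le> r" "r \<le> D"
  shows "weak_conv_m (\<lambda>n. Nd (X n) r D) (Mr D r)"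
  unfolding weak_conv_m_def weak_conv_def Mr_props(2)[OF r]
  using cdf_Nd_lim[OF X r] by blast




lemma order_stat_mem:
  assumes "1 \<le> r" "r \<le> D"
  shows "\<exists>i<D. order_stat r D x = x i"
proof -
  have "order_stat r D x \<in> set (sort (map x [0..<D]))"
    unfolding order_stat_def using assms by (intro nth_mem) auto
  then show ?thesis by auto
qed

lemma moment4_Nd:
  assumes mu: "mu \<ge> 1" and r: "1 \<le> r" "r \<le> D"
  shows "integrable (Nd mu r D) (\<lambda>x. x^4) \<and> (\<integral>x. x^4 \<partial>Nd mu r D) \<le> 4 * real D"
proof -
  let ?Q = "Pi_pmf {..<D} (0::nat) (\<lambda>_. poisson_pmf mu)"
  define g where "g k = ((real k - mu) / sqrt mu) ^ 4" for k :: nat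
  have mu0: "mu > 0" using mu by simp
  have g_eq: "g k = (real k - mu)^4 / mu^2" for k
  proof -
    have "sqrt mu ^ 4 = mu^2" using mu0
      by (metis less_imp_le power_mult real_sqrt_pow2 num_double numeral_times_numeral power2_eq_square)
    then show ?thesis unfolding g_def by (simp add: power_divide)
  qed
  have gint: "integrable (poisson_pmf mu) g" unfolding g_eq using poisson_central4(1)[OF mu0] by simp
  have gval: "(\<integral>k. g k \<partial>poisson_pmf mu) = (3 * mu^2 + mu) / mu^2"
    unfolding g_eq using poisson_central4[OF mu0] by simp
  have gle: "(3 * mu^2 + mu) / mu^2 \<le> 4"
  proof -
    have "3 * mu^2 + mu \<le> 4 * mu^2" using mu by (simp add: power2_eq_square)
    then show ?thesis using mu0 by (simp add: divide_le_eq)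
  qed
  have comp: "map_pmf (\<lambda>f. f i) ?Q = poisson_pmf mu" if "i < D" for i
    using Pi_pmf_component[of "{..<D}" i 0 "\<lambda>_. poisson_pmf mu"] that by simp
  have ci: "integrable ?Q (\<lambda>f. g (f i))" if "i < D" for i
    using gint comp[OF that] integrable_map_pmf_eq[of "\<lambda>f. f i" ?Q g] by simp
  have cv: "(\<integral>f. g (f i) \<partial>?Q) = (3 * mu^2 + mu) / mu^2" if "i < D" for i
    using gval comp[OF that] integral_map_pmf[of "\<lambda>f. f i" ?Q g] by simp
  have sint: "integrable ?Q (\<lambda>f. \<Sum>i<D. g (f i))" using ci by (intro Bochner_Integration.integrable_sum) auto
  have bnd: "g (order_stat r D f) \<le> (\<Sum>i<D. g (f i))" for f
  proof -
    obtain j where j: "j < D" "order_stat r D f = f j" using order_stat_mem[OF r] by blast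
    have "g (f j) \<le> (\<Sum>i<D. g (f i))"
      using j(1) by (intro member_le_sum) (auto simp: g_def zero_le_even_power)
    then show ?thesis using j by simp
  qed
  have oint: "integrable ?Q (\<lambda>f. g (order_stat r D f))"
  proof (rule Bochner_Integration.integrable_bound[OF sint])
    show "AE x in ?Q. norm (g (order_stat r D x)) \<le> norm (\<Sum>i<D. g (x i))"
      using bnd by (auto intro!: AE_I2 simp: g_def zero_le_even_power) (smt (verit) bnd g_def)
  qed simp
  have "(\<integral>f. g (order_stat r D f) \<partial>?Q) \<le> (\<integral>f. (\<Sum>i<D. g (f i)) \<partial>?Q)"
    using oint sint bnd by (intro integral_mono) auto
  also have "\<dots> = (\<Sum>i<D. (\<integral>f. g (f i) \<partial>?Q))" using ci by (intro Bochner_Integration.integral_sum) auto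
  also have "\<dots> = real D * ((3 * mu^2 + mu) / mu^2)" using cv by simp
  also have "\<dots> \<le> real D * 4" using gle by (intro mult_left_mono) auto
  also have "\<dots> = 4 * real D" by simp
  finally have le: "(\<integral>f. g (order_stat r D f) \<partial>?Q) \<le> 4 * real D" .
  have e1: "integrable (Nd mu r D) (\<lambda>x. x^4) \<longleftrightarrow> integrable ?Q (\<lambda>f. g (order_stat r D f))"
    unfolding Nd_def pois_order_pmf_def g_def by (subst integrable_distr_eq) auto
  have e2: "(\<integral>x. x^4 \<partial>Nd mu r D) = (\<integral>f. g (order_stat r D f) \<partial>?Q)"
    unfolding Nd_def pois_order_pmf_def g_def by (subst integral_distr) auto
  show ?thesis using e1 e2 oint le by simp
qed

lemma dispersion_Nd:
  assumes mu: "mu > 0" and i4: "integrable (Nd mu r D) (\<lambda>x. x^4)"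
  defines "m \<equiv> (\<integral>x. x \<partial>Nd mu r D)" and "s \<equiv> (\<integral>x. x^2 \<partial>Nd mu r D)"
  shows "dispersion (pois_order_pmf mu r D) = (s - m^2) / (1 + m / sqrt mu)"
proof -
  let ?p = "pois_order_pmf mu r D"
  define u where "u y = (real y - mu) / sqrt mu" for y :: nat
  interpret Nd: real_distribution "Nd mu r D" by (rule real_distribution_Nd)
  have x4: "x^2 \<le> 1 + x^4" "\<bar>x\<bar> \<le> 1 + x^4" for x :: real
  proof -
    have "0 \<le> (x^2 - 1)^2" by simp
    then have a: "2 * x^2 \<le> 1 + x^4" by (simp add: power2_eq_square power4_eq_xxxx algebra_simps)
    moreover have "0 \<le> x^2" by simp
    ultimately show "x^2 \<le> 1 + x^4" by linarith
    show "\<bar>x\<bar> \<le> 1 + x^4"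
    proof (cases "\<bar>x\<bar> \<le> 1")
      case True
      moreover have "0 \<le> x^4" by (simp add: zero_le_even_power)
      ultimately show ?thesis by linarith
    next
      case False
      then have "\<bar>x\<bar> * 1 \<le> \<bar>x\<bar> * \<bar>x\<bar>" by (intro mult_left_mono) auto
      then have b: "\<bar>x\<bar> \<le> x^2" by (simp add: power2_eq_square abs_mult_self_eq)
      then have "x^2 * 1 \<le> x^2 * x^2" using False by (intro mult_left_mono) auto
      then have "x^2 \<le> x^4" by (simp add: power4_eq_xxxx power2_eq_square mult.assoc)
      then show ?thesis using b by linarith
    qed
  qed
  have i14: "integrable (Nd mu r D) (\<lambda>x. 1 + x^4)" using i4 by simp
  have n14: "\<bar>1 + x^4\<bar> = 1 + x^4" for x :: real
    by (simp add: abs_of_nonneg add_nonneg_nonneg zero_le_even_power)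
  have i1: "integrable (Nd mu r D) (\<lambda>x. x)"
  proof (rule Bochner_Integration.integrable_bound[OF i14])
    show "AE x in Nd mu r D. norm x \<le> norm (1 + x^4)"
      by (intro AE_I2) (simp only: n14 x4 real_norm_def)
  qed auto
  have i2: "integrable (Nd mu r D) (\<lambda>x. x^2)"
  proof (rule Bochner_Integration.integrable_bound[OF i14])
    show "AE x in Nd mu r D. norm (x^2) \<le> norm (1 + x^4)"
      by (intro AE_I2) (simp only: n14 x4 real_norm_def abs_power2)
  qed auto
  have pu1: "integrable ?p u" using i1 unfolding Nd_def u_def by (subst (asm) integrable_distr_eq) auto
  have pu2: "integrable ?p (\<lambda>y. (u y)^2)" using i2 unfolding Nd_def u_def by (subst (asm) integrable_distr_eq) auto
  have m_eq: "m = (\<integral>y. u y \<partial>?p)" unfolding m_def Nd_def u_def by (subst integral_distr) auto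
  have s_eq: "s = (\<integral>y. (u y)^2 \<partial>?p)" unfolding s_def Nd_def u_def by (subst integral_distr) auto
  have sq: "sqrt mu * sqrt mu = mu" using mu by simp
  have ry: "real y = mu + sqrt mu * u y" for y unfolding u_def using mu by (simp add: field_simps)
  have E: "measure_pmf.expectation ?p real = mu + sqrt mu * m"
  proof -
    have "measure_pmf.expectation ?p real = (\<integral>y. mu + sqrt mu * u y \<partial>?p)" by (simp add: ry[symmetric])
    also have "\<dots> = mu + sqrt mu * m" using pu1 m_eq by simp
    finally show ?thesis .
  qed
  have V: "measure_pmf.expectation ?p (\<lambda>y. (real y - (mu + sqrt mu * m))^2) = mu * (s - m^2)"
  proof -
    have "(\<lambda>y. (real y - (mu + sqrt mu * m))^2) = (\<lambda>y. mu * (u y)^2 - 2 * mu * m * u y + mu * m^2)"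
    proof
      fix y
      have "(real y - (mu + sqrt mu * m))^2 = mu * (u y - m)^2"
      proof -
        have sq2: "sqrt mu * (sqrt mu * z) = mu * z" for z
          using sq by (metis mult.assoc)
        show ?thesis using mu by (simp add: ry power2_eq_square algebra_simps sq2)
      qed
      then show "(real y - (mu + sqrt mu * m))^2 = mu * (u y)^2 - 2 * mu * m * u y + mu * m^2"
        by (simp add: power2_eq_square algebra_simps)
    qed
    then have "measure_pmf.expectation ?p (\<lambda>y. (real y - (mu + sqrt mu * m))^2) = (\<integral>y. mu * (u y)^2 - 2 * mu * m * u y + mu * m^2 \<partial>?p)"
      by simp
    also have "\<dots> = mu * s - 2 * mu * m * m + mu * m^2"
      using pu1 pu2 m_eq s_eq by simp
    finally show ?thesis by (simp add: power2_eq_square algebra_simps)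
  qed
  have den: "mu + sqrt mu * m = mu * (1 + m / sqrt mu)"
    using mu sq by (simp add: field_simps)
  have "dispersion ?p = mu * (s - m^2) / (mu + sqrt mu * m)"
    unfolding dispersion_def E V ..
  then show ?thesis unfolding den using mu by simp
qed




lemma abs_le_1_sq: "\<bar>x::real\<bar> \<le> 1 + x^2"
proof (cases "\<bar>x\<bar> \<le> 1")
  case True
  moreover have "0 \<le> x^2" by simp
  ultimately show ?thesis by linarith
next
  case False
  then have "\<bar>x\<bar> * 1 \<le> \<bar>x\<bar> * \<bar>x\<bar>" by (intro mult_left_mono) auto
  then have "\<bar>x\<bar> \<le> x^2" by (simp add: power2_eq_square abs_mult_self_eq)
  then show ?thesis by linarith
qed

lemma lim_r:
  assumes r: "1 \<le> r" "r \<le> D"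
  shows "((\<lambda>mu. dispersion (pois_order_pmf mu r D)) \<longlongrightarrow>
           (\<integral>x. x^2 \<partial>Mr D r) - (\<integral>x. x \<partial>Mr D r)^2) at_top"
proof (rule tendsto_at_topI_sequentially)
  fix X :: "nat \<Rightarrow> real" assume X: "filterlim X at_top sequentially"
  let ?N = "\<lambda>n. Nd (X n) r D"
  have X1: "eventually (\<lambda>n. X n \<ge> 1) sequentially"
    using X by (simp add: filterlim_at_top)
  have ev: "eventually (\<lambda>n. integrable (?N n) (\<lambda>x. x^4) \<and> (\<integral>x. x^4 \<partial>?N n) \<le> 4 * real D) sequentially"
    using X1 by eventually_elim (rule moment4_Nd[OF _ r])
  have m: "(\<lambda>n. \<integral>x. x \<partial>?N n) \<longlonglongrightarrow> (\<integral>x. x \<partial>Mr D r)"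
    by (rule UI_conv(2)[OF real_distribution_Nd Mr_props(1)[OF r] weak_conv_Nd[OF X r] ev])
       (auto simp: abs_le_1_sq)
  have s: "(\<lambda>n. \<integral>x. x^2 \<partial>?N n) \<longlonglongrightarrow> (\<integral>x. x^2 \<partial>Mr D r)"
    by (rule UI_conv(2)[OF real_distribution_Nd Mr_props(1)[OF r] weak_conv_Nd[OF X r] ev])
       (auto simp: abs_le_1_sq)
  have sq: "(\<lambda>n. inverse (sqrt (X n))) \<longlonglongrightarrow> 0"
    by (rule tendsto_inverse_0_at_top[OF filterlim_compose[OF sqrt_at_top X]])
  have "(\<lambda>n. ((\<integral>x. x^2 \<partial>?N n) - (\<integral>x. x \<partial>?N n)^2) / (1 + (\<integral>x. x \<partial>?N n) * inverse (sqrt (X n))))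
      \<longlonglongrightarrow> ((\<integral>x. x^2 \<partial>Mr D r) - (\<integral>x. x \<partial>Mr D r)^2) / (1 + (\<integral>x. x \<partial>Mr D r) * 0)"
    by (intro tendsto_intros m s sq) simp
  then have lim: "(\<lambda>n. ((\<integral>x. x^2 \<partial>?N n) - (\<integral>x. x \<partial>?N n)^2) / (1 + (\<integral>x. x \<partial>?N n) / sqrt (X n)))
      \<longlonglongrightarrow> (\<integral>x. x^2 \<partial>Mr D r) - (\<integral>x. x \<partial>Mr D r)^2"
    by (simp add: divide_inverse)
  have E: "eventually (\<lambda>n. ((\<integral>x. x^2 \<partial>?N n) - (\<integral>x. x \<partial>?N n)^2) / (1 + (\<integral>x. x \<partial>?N n) / sqrt (X n))
       = dispersion (pois_order_pmf (X n) r D)) sequentially"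
    using ev X1
  proof eventually_elim
    case (elim n)
    then show ?case using dispersion_Nd[of "X n" r D] by simp
  qed
  show "(\<lambda>n. dispersion (pois_order_pmf (X n) r D)) \<longlonglongrightarrow> (\<integral>x. x^2 \<partial>Mr D r) - (\<integral>x. x \<partial>Mr D r)^2"
    using tendsto_cong[OF E] lim by simp
qed

lemma Mr_symm:
  assumes r: "1 \<le> r" "r \<le> D"
  shows "Mr D (D - r + 1) = distr (Mr D r) borel uminus"
proof -
  have r': "1 \<le> D - r + 1" "D - r + 1 \<le> D" using r by auto
  interpret M: real_distribution "Mr D r" by (rule Mr_props(1)[OF r])
  show ?thesis
  proof (rule cdf_unique)
    show "real_distribution (Mr D (D - r + 1))" by (rule Mr_props(1)[OF r'])
    show "real_distribution (distr (Mr D r) borel uminus)" by (rule M.real_distribution_distr) simp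
    show "cdf (Mr D (D - r + 1)) = cdf (distr (Mr D r) borel uminus)"
    proof
      fix x
      have "cdf (Mr D (D - r + 1)) x = Gr D (D - r + 1) x" using Mr_props(2)[OF r'] by simp
      also have "\<dots> = prb D (D - r + 1) (1 - Phi (- x))"
        unfolding Gr_def using Phi_symm[of "-x"] by simp
      also have "\<dots> = 1 - Gr D r (- x)"
        unfolding Gr_def using prb_symm[OF r Phi01] by simp
      also have "Gr D r (- x) = measure (Mr D r) {..< - x}"
      proof -
        have "measure (Mr D r) {-x} = 0"
          using M.isCont_cdf[of "-x"] isCont_Gr Mr_props(2)[OF r] by simp
        moreover have "{.. -x} = {..< -x} \<union> {-x}" by auto
        ultimately have "cdf (Mr D r) (-x) = measure (Mr D r) {..< -x}"
          unfolding cdf_def using M.finite_measure_Union[of "{..< -x}" "{-x}"] by simp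
        then show ?thesis using Mr_props(2)[OF r] by simp
      qed
      also have "1 - measure (Mr D r) {..< - x} = measure (Mr D r) {-x..}"
        using M.prob_compl[of "{..< -x}"] by (simp add: Compl_eq_Diff_UNIV[symmetric])
      also have "\<dots> = cdf (distr (Mr D r) borel uminus) x"
        unfolding cdf_def by (subst measure_distr) (auto intro!: arg_cong[where f="measure _"])
      finally show "cdf (Mr D (D - r + 1)) x = cdf (distr (Mr D r) borel uminus) x" .
    qed
  qed
qed

theorem mainTheorem2:
  fixes D r :: nat
  assumes "1 \<le> r" and "r \<le> D"
  shows "\<exists>L::real.
           ((\<lambda>\<mu>. dispersion (pois_order_pmf \<mu> r D)) \<longlongrightarrow> L) at_top \<and>
           ((\<lambda>\<mu>. dispersion (pois_order_pmf \<mu> (D - r + 1) D)) \<longlongrightarrow> L) at_top"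
proof -
  have r': "1 \<le> D - r + 1" "D - r + 1 \<le> D" using assms by auto
  let ?M = "Mr D r"
  interpret M: real_distribution "Mr D r" by (rule Mr_props(1)[OF assms])
  have l1: "((\<lambda>\<mu>. dispersion (pois_order_pmf \<mu> r D)) \<longlongrightarrow> (\<integral>x. x^2 \<partial>?M) - (\<integral>x. x \<partial>?M)^2) at_top"
    by (rule lim_r[OF assms])
  have l2: "((\<lambda>\<mu>. dispersion (pois_order_pmf \<mu> (D - r + 1) D)) \<longlongrightarrow>
      (\<integral>x. x^2 \<partial>Mr D (D - r + 1)) - (\<integral>x. x \<partial>Mr D (D - r + 1))^2) at_top"
    by (rule lim_r[OF r'])
  have "(\<integral>x. x^2 \<partial>Mr D (D - r + 1)) = (\<integral>x. x^2 \<partial>?M)"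
    unfolding Mr_symm[OF assms] by (subst integral_distr) auto
  moreover have "(\<integral>x. x \<partial>Mr D (D - r + 1)) = - (\<integral>x. x \<partial>?M)"
    unfolding Mr_symm[OF assms] by (subst integral_distr) auto
  ultimately show ?thesis using l1 l2 by auto
qed



end
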